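(* For all $n\ge 1$, $|F_n(321,3142)|=2^{n-1}$.
   Context: A permutation $\pi$ avoids a classical pattern $p\in S_k$ if no subsequence of $\pi$ of length $k$ is order-isomorphic to $p$. A Fishburn permutation is a permutation $\pi=\pi_1\cdots\pi_n$ of $[n]$ for which there are no indices $i<j$ with $\pi_j<\pi_i<\pi_{i+1}$ and $\pi_i=\pi_j+1$. $F_n(\sigma_1,\dots,\sigma_k)$ denotes the set of Fishburn permutations of length $n$ avoiding each of the classical patterns $\sigma_1,\dots,\sigma_k$. *)

theory Defs
  imports Main
begin

text \<open>Permutations of [n] are represented as lists of length n whose entries are exactly 1..n.
Positions are 0-indexed.\<close>

definition perms :: "nat \<Rightarrow> nat list set" where
  "perms n = {\<pi>. distinct \<pi> \<and> set \<pi> = {1..n}}"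

definition contains :: "nat list \<Rightarrow> nat list \<Rightarrow> bool" where
  "contains \<pi> p \<longleftrightarrow> (\<exists>idx :: nat \<Rightarrow> nat.
      (\<forall>a b. a < b \<and> b < length p \<longrightarrow> idx a < idx b) \<and>
      (\<forall>a < length p. idx a < length \<pi>) \<and>
      (\<forall>a < length p. \<forall>b < length p. (\<pi> ! idx a < \<pi> ! idx b \<longleftrightarrow> p ! a < p ! b)))"

definition avoids :: "nat list \<Rightarrow> nat list \<Rightarrow> bool" where
  "avoids \<pi> p \<longleftrightarrow> \<not> contains \<pi> p"

definition fishburn :: "nat list \<Rightarrow> bool" where
  "fishburn \<pi> \<longleftrightarrow> \<not> (\<exists>i j. i < j \<and> j < length \<pi> \<and> i + 1 < length \<pi> \<and>
      \<pi> ! j < \<pi> ! i \<and> \<pi> ! i < \<pi> ! (i + 1) \<and> \<pi> ! i = \<pi> ! j + 1)"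

definition F :: "nat \<Rightarrow> nat list list \<Rightarrow> nat list set" where
  "F n ps = {\<pi> \<in> perms n. fishburn \<pi> \<and> (\<forall>p \<in> set ps. avoids \<pi> p)}"

end

theory Submission
  imports Defs
begin

definition opre :: "nat list \<Rightarrow> nat list \<Rightarrow> bool" where
 "opre s t \<longleftrightarrow> length s \<le> length t \<and> (\<forall>a<length s. \<forall>b<length s. (s!a < s!b) = (t!a < t!b))"

definition inc :: "nat \<Rightarrow> nat \<Rightarrow> nat" where "inc n v = (if n \<le> v then Suc v else v)"

lemma inc_less_iff: "inc n a < inc n b \<longleftrightarrow> a < b" by (auto simp: inc_def)

lemma inj_inc: "inj (inc n)" by (auto simp: inj_def inc_def split: if_splits)

lemma opre_map_inc: "opre s (map (inc n) s)" "opre (map (inc n) s) s"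
  by (auto simp: opre_def inc_less_iff)

lemma opre_snoc: "opre s (s@[v])" by (auto simp: opre_def nth_append)

lemma contains_opre:
  assumes o: "opre s t" and c: "contains s p" shows "contains t p"
proof -
  from c obtain idx where i1: "\<forall>a b. a < b \<and> b < length p \<longrightarrow> idx a < idx b"
    and i2: "\<forall>a<length p. idx a < length s"
    and i3: "\<forall>a<length p. \<forall>b<length p. (s!idx a < s!idx b) = (p!a < p!b)"
    unfolding contains_def by blast
  have l: "length s \<le> length t" and oo: "\<forall>a<length s. \<forall>b<length s. (s!a < s!b) = (t!a < t!b)"
    using o by (auto simp: opre_def)
  show ?thesis unfolding contains_def
  proof (intro exI conjI)
    show "\<forall>a b. a < b \<and> b < length p \<longrightarrow> idx a < idx b" by fact
    show "\<forall>a<length p. idx a < length t" using i2 l by fastforce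
    show "\<forall>a<length p. \<forall>b<length p. (t!idx a < t!idx b) = (p!a < p!b)" using i2 i3 oo by metis
  qed
qed

lemma contains_snoc_cases:
  assumes c: "contains (s@[v]) p" and ne: "p \<noteq> []"
  shows "contains s p \<or> (\<exists>idx. (\<forall>a<length p. idx a < Suc (length s)) \<and>
     (\<forall>a<length p. \<forall>b<length p. ((s@[v])!idx a < (s@[v])!idx b) = (p!a < p!b)) \<and> idx (length p - 1) = length s)"
proof -
  from c obtain idx where i1: "\<forall>a b. a < b \<and> b < length p \<longrightarrow> idx a < idx b"
    and i2: "\<forall>a<length p. idx a < length (s@[v])"
    and i3: "\<forall>a<length p. \<forall>b<length p. ((s@[v])!idx a < (s@[v])!idx b) = (p!a < p!b)"
    unfolding contains_def by blast
  show ?thesis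
  proof (cases "idx (length p - 1) = length s")
    case True thus ?thesis using i2 i3 by auto
  next
    case False
    have le: "idx a \<le> idx (length p - 1)" if "a < length p" for a
    proof (cases "a = length p - 1")
      case False
      have "a < length p - 1" "length p - 1 < length p" using False that ne by auto
      thus ?thesis using i1[rule_format, of a "length p - 1"] by simp
    qed simp
    have lt: "\<forall>a<length p. idx a < length s"
    proof (intro allI impI)
      fix a assume a: "a < length p"
      have "idx (length p - 1) < Suc (length s)" using i2 ne by simp
      with False have "idx (length p - 1) < length s" by simp
      with le[OF a] show "idx a < length s" by simp
    qed
    have "contains s p" unfolding contains_def
    proof (intro exI conjI)
      show "\<forall>a b. a < b \<and> b < length p \<longrightarrow> idx a < idx b" by fact
      show "\<forall>a<length p. idx a < length s" by fact
      show "\<forall>a<length p. \<forall>b<length p. (s!idx a < s!idx b) = (p!a < p!b)"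
        using lt i3 by (auto simp: nth_append)
    qed
    thus ?thesis ..
  qed
qed

lemma avoid_snoc:
  assumes bnd: "\<forall>x\<in>set s. x \<le> Suc v" and p: "p = [3,2,1] \<or> p = [3,1,4,2]"
  shows "avoids (s@[v]) p \<longleftrightarrow> avoids s p"
proof
  assume "avoids (s@[v]) p" thus "avoids s p"
    using contains_opre[OF opre_snoc] unfolding avoids_def by blast
next
  assume av: "avoids s p"
  show "avoids (s@[v]) p"
  proof (rule ccontr)
    assume "\<not> avoids (s@[v]) p"
    hence "contains (s@[v]) p" by (simp add: avoids_def)
    from contains_snoc_cases[OF this] p av obtain idx where
      i2: "\<forall>a<length p. idx a < Suc (length s)" and
      i3: "\<forall>a<length p. \<forall>b<length p. ((s@[v])!idx a < (s@[v])!idx b) = (p!a < p!b)" and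
      i4: "idx (length p - 1) = length s" unfolding avoids_def by auto
    let ?t = "s@[v]"
    have bt: "?t!k \<le> Suc v" if "k < Suc (length s)" for k
      using bnd that by (auto simp: nth_append)
    from p show False
    proof
      assume pp: "p = [3,2,1]"
      have a: "?t!idx 2 < ?t!idx 1" using i3[rule_format, of 2 1] pp by simp
      have b: "?t!idx 1 < ?t!idx 0" using i3[rule_format, of 1 0] pp by simp
      have c0: "idx 2 = length s" using i4 pp by (simp add: numeral_2_eq_2)
      have c: "?t!idx 2 = v" by (simp add: c0)
      have d: "?t!idx 0 \<le> Suc v" using bt i2 pp by simp
      show False using a b c d by simp
    next
      assume pp: "p = [3,1,4,2]"
      have a: "?t!idx 3 < ?t!idx 0" using i3[rule_format, of 3 0] pp by simp
      have b: "?t!idx 0 < ?t!idx 2" using i3[rule_format, of 0 2] pp by simp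
      have c0: "idx 3 = length s" using i4 pp by (simp add: numeral_3_eq_3)
      have c: "?t!idx 3 = v" by (simp add: c0)
      have d: "?t!idx 2 \<le> Suc v" using bt i2 pp by simp
      show False using a b c d by simp
    qed
  qed
qed

lemma fish_prefix: "fishburn (s@[v]) \<Longrightarrow> fishburn s"
  unfolding fishburn_def
proof (elim contrapos_nn exE conjE)
  fix i j assume h: "i < j" "j < length s" "i + 1 < length s" "s ! j < s ! i" "s ! i < s ! (i + 1)" "s ! i = s ! j + 1"
  show "\<exists>i j. i < j \<and> j < length (s @ [v]) \<and> i + 1 < length (s @ [v]) \<and>
        (s @ [v]) ! j < (s @ [v]) ! i \<and> (s @ [v]) ! i < (s @ [v]) ! (i + 1) \<and> (s @ [v]) ! i = (s @ [v]) ! j + 1"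
    by (rule exI[of _ i], rule exI[of _ j]) (use h in \<open>auto simp: nth_append\<close>)
qed

lemma fish_snoc:
  assumes bnd: "\<forall>x\<in>set s. x \<le> Suc v" and f: "fishburn s" shows "fishburn (s@[v])"
  unfolding fishburn_def
proof
  assume "\<exists>i j. i < j \<and> j < length (s @ [v]) \<and> i + 1 < length (s @ [v]) \<and>
        (s @ [v]) ! j < (s @ [v]) ! i \<and> (s @ [v]) ! i < (s @ [v]) ! (i + 1) \<and> (s @ [v]) ! i = (s @ [v]) ! j + 1"
  then obtain i j where h: "i < j" "j < length (s @ [v])" "i + 1 < length (s @ [v])"
      "(s @ [v]) ! j < (s @ [v]) ! i" "(s @ [v]) ! i < (s @ [v]) ! (i + 1)" "(s @ [v]) ! i = (s @ [v]) ! j + 1"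
    by blast
  have bt: "(s@[v])!k \<le> Suc v" if "k < Suc (length s)" for k
    using bnd that by (auto simp: nth_append)
  show False
  proof (cases "j = length s")
    case True
    then show ?thesis using h bt[of "i+1"] by (simp add: nth_append)
  next
    case False
    hence "j < length s" "i < length s" "i + 1 < length s" using h by auto
    thus ?thesis using f h unfolding fishburn_def by (auto simp: nth_append)
  qed
qed

lemma fish_map_inc:
  assumes bnd: "\<forall>x\<in>set s. x \<le> n" shows "fishburn (map (inc n) s) \<longleftrightarrow> fishburn s"
proof -
  let ?t = "map (inc n) s"
  have "(i < j \<and> j < length ?t \<and> i + 1 < length ?t \<and> ?t ! j < ?t ! i \<and> ?t ! i < ?t ! (i + 1) \<and> ?t ! i = ?t ! j + 1)
    \<longleftrightarrow> (i < j \<and> j < length s \<and> i + 1 < length s \<and> s ! j < s ! i \<and> s ! i < s ! (i + 1) \<and> s ! i = s ! j + 1)" for i j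
  proof (cases "i < j \<and> j < length s \<and> i + 1 < length s")
    case True
    have "s!(i+1) \<le> n" "s!j \<le> n" "s!i \<le> n" using bnd True by auto
    then show ?thesis using True by (auto simp: inc_def)
  qed auto
  thus ?thesis unfolding fishburn_def by blast
qed


abbreviation PP :: "nat list list" where "PP \<equiv> [[3,2,1],[3,1,4,2]]"

lemma F_P_iff: "\<pi> \<in> F n PP \<longleftrightarrow> \<pi> \<in> perms n \<and> fishburn \<pi> \<and> avoids \<pi> [3,2,1] \<and> avoids \<pi> [3,1,4,2]"
  by (simp add: F_def)

lemma perms_bound: "\<sigma> \<in> perms n \<Longrightarrow> \<forall>x\<in>set \<sigma>. x \<le> n" by (auto simp: perms_def)

lemma perms_e1: "\<sigma> \<in> perms n \<Longrightarrow> \<sigma>@[Suc n] \<in> perms (Suc n)"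
  by (auto simp: perms_def)

lemma perms_e2: assumes "\<sigma> \<in> perms n" "n \<ge> 1" shows "map (inc n) \<sigma> @ [n] \<in> perms (Suc n)"
proof -
  have d: "distinct \<sigma>" and s: "set \<sigma> = {1..n}" using assms by (auto simp: perms_def)
  have "distinct (map (inc n) \<sigma>)" using d inj_on_subset[OF inj_inc subset_UNIV] by (simp add: distinct_map)
  moreover have "n \<notin> set (map (inc n) \<sigma>)" by (auto simp: inc_def)
  moreover have "set (map (inc n) \<sigma>) \<union> {n} = {1..Suc n}"
  proof
    show "set (map (inc n) \<sigma>) \<union> {n} \<subseteq> {1..Suc n}" using s assms(2) by (auto simp: inc_def)
    show "{1..Suc n} \<subseteq> set (map (inc n) \<sigma>) \<union> {n}"
    proof
      fix y assume y: "y \<in> {1..Suc n}"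
      show "y \<in> set (map (inc n) \<sigma>) \<union> {n}"
      proof (cases "y < n")
        case True hence "inc n y = y" "y \<in> set \<sigma>" using s y by (auto simp: inc_def)
        thus ?thesis by (metis UnI1 image_eqI set_map)
      next
        case False
        show ?thesis proof (cases "y = n")
          case False with \<open>\<not> y<n\<close> y have "y = Suc n" by auto
          moreover have "inc n n = Suc n" "n \<in> set \<sigma>" using s assms(2) by (auto simp: inc_def)
          ultimately show ?thesis by (metis UnI1 image_eqI set_map)
        qed simp
      qed
    qed
  qed
  ultimately show ?thesis by (auto simp: perms_def)
qed

lemma F_e1: assumes "\<sigma> \<in> perms n" shows "\<sigma>@[Suc n] \<in> F (Suc n) PP \<longleftrightarrow> \<sigma> \<in> F n PP"
proof -
  have b: "\<forall>x\<in>set \<sigma>. x \<le> Suc (Suc n)" using perms_bound[OF assms] by auto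
  have f: "fishburn (\<sigma>@[Suc n]) \<longleftrightarrow> fishburn \<sigma>" using fish_prefix fish_snoc[OF b] by blast
  have a1: "avoids (\<sigma>@[Suc n]) [3,2,1] \<longleftrightarrow> avoids \<sigma> [3,2,1]" by (rule avoid_snoc[OF b]) simp
  have a2: "avoids (\<sigma>@[Suc n]) [3,1,4,2] \<longleftrightarrow> avoids \<sigma> [3,1,4,2]" by (rule avoid_snoc[OF b]) simp
  show ?thesis unfolding F_P_iff using f a1 a2 assms(1) perms_e1[OF assms] by blast
qed

lemma F_e2: assumes "\<sigma> \<in> perms n" "n \<ge> 1" shows "map (inc n) \<sigma> @ [n] \<in> F (Suc n) PP \<longleftrightarrow> \<sigma> \<in> F n PP"
proof -
  have b0: "\<forall>x\<in>set \<sigma>. x \<le> n" using perms_bound[OF assms(1)] by auto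
  have b: "\<forall>x\<in>set (map (inc n) \<sigma>). x \<le> Suc n" using b0 by (auto simp: inc_def)
  have av: "avoids (map (inc n) \<sigma>) p \<longleftrightarrow> avoids \<sigma> p" for p
    using contains_opre[OF opre_map_inc(1)] contains_opre[OF opre_map_inc(2)] unfolding avoids_def by blast
  have f: "fishburn (map (inc n) \<sigma> @ [n]) \<longleftrightarrow> fishburn \<sigma>"
    using fish_prefix fish_snoc[OF b] fish_map_inc[OF b0] by blast
  have a1: "avoids (map (inc n) \<sigma> @ [n]) [3,2,1] \<longleftrightarrow> avoids \<sigma> [3,2,1]"
    using avoid_snoc[OF b, of "[3,2,1]"] av by simp
  have a2: "avoids (map (inc n) \<sigma> @ [n]) [3,1,4,2] \<longleftrightarrow> avoids \<sigma> [3,1,4,2]"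
    using avoid_snoc[OF b, of "[3,1,4,2]"] av by simp
  show ?thesis unfolding F_P_iff using f a1 a2 assms(1) perms_e2[OF assms] by blast
qed

lemma all3: "(\<forall>a<(3::nat). P a) \<longleftrightarrow> P 0 \<and> P 1 \<and> P 2"
  by (auto simp: less_Suc_eq numeral_3_eq_3 numeral_2_eq_2)
lemma all4: "(\<forall>a<(4::nat). P a) \<longleftrightarrow> P 0 \<and> P 1 \<and> P 2 \<and> P 3"
  by (auto simp: less_Suc_eq numeral_3_eq_3 numeral_2_eq_2 eval_nat_numeral)
lemma pairs3: "(\<forall>a b. a < b \<and> b < (3::nat) \<longrightarrow> Q a b) \<longleftrightarrow> Q 0 1 \<and> Q 0 2 \<and> Q 1 2"
  by (auto simp: less_Suc_eq numeral_3_eq_3 numeral_2_eq_2)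
lemma pairs4: "(\<forall>a b. a < b \<and> b < (4::nat) \<longrightarrow> Q a b) \<longleftrightarrow> Q 0 1 \<and> Q 0 2 \<and> Q 1 2 \<and> Q 0 3 \<and> Q 1 3 \<and> Q 2 3"
  by (auto simp: less_Suc_eq numeral_3_eq_3 numeral_2_eq_2 eval_nat_numeral)


lemma len3: "length [x,y,z] = (3::nat)" by simp
lemma len4: "length [x,y,z,w] = (4::nat)" by simp
lemma all3L: "(\<forall>a<length [x,y,z]. P a) \<longleftrightarrow> P 0 \<and> P 1 \<and> P 2"
  by (simp only: len3 all3)
lemma all4L: "(\<forall>a<length [x,y,z,w]. P a) \<longleftrightarrow> P 0 \<and> P 1 \<and> P 2 \<and> P 3"
  by (simp only: len4 all4)
lemma pairs3L: "(\<forall>a b. a < b \<and> b < length [x,y,z] \<longrightarrow> Q a b) \<longleftrightarrow> Q 0 1 \<and> Q 0 2 \<and> Q 1 2"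
  by (simp only: len3 pairs3)
lemma pairs4L: "(\<forall>a b. a < b \<and> b < length [x,y,z,w] \<longrightarrow> Q a b) \<longleftrightarrow> Q 0 1 \<and> Q 0 2 \<and> Q 1 2 \<and> Q 0 3 \<and> Q 1 3 \<and> Q 2 3"
  by (simp only: len4 pairs4)

lemma last_big:
  assumes \<pi>: "\<pi> \<in> F (Suc n) PP" and n: "n \<ge> 1"
  shows "last \<pi> = n \<or> last \<pi> = Suc n"
proof (rule ccontr)
  assume neg: "\<not> ?thesis"
  have d: "distinct \<pi>" and s: "set \<pi> = {1..Suc n}" and f: "fishburn \<pi>"
    and a1: "avoids \<pi> [3,2,1]" and a2: "avoids \<pi> [3,1,4,2]"
    using \<pi> unfolding F_P_iff perms_def by auto
  have L: "length \<pi> = Suc n" using distinct_card[OF d] s by simp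
  have ne: "\<pi> \<noteq> []" using L by auto
  have lx: "last \<pi> = \<pi> ! n" using last_conv_nth[OF ne] L by simp
  define x where "x = \<pi>!n"
  have "\<pi>!n \<in> set \<pi>" using L by simp
  hence x: "x \<ge> 1" "x < n" using neg s lx by (auto simp: x_def)
  have "x+1 \<in> set \<pi>" "x+2 \<in> set \<pi>" using s x by auto
  then obtain i j where i: "i < Suc n" "\<pi>!i = x+1" and j: "j < Suc n" "\<pi>!j = x+2"
    by (metis L in_set_conv_nth)
  have dist: "\<pi>!a = \<pi>!b \<longleftrightarrow> a = b" if "a < Suc n" "b < Suc n" for a b
    using nth_eq_iff_index_eq[OF d] L that by simp
  have xn: "\<pi>!n = x" by (simp add: x_def)
  have "i \<noteq> n" "j \<noteq> n" "i \<noteq> j" using i j xn by auto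
  hence ijn: "i < n" "j < n" using i j by auto
  have ij: "i < j"
  proof (rule ccontr)
    assume "\<not> i < j"
    with \<open>i \<noteq> j\<close> have ji: "j < i" by simp
    have "contains \<pi> [3,2,1]" unfolding contains_def
      apply (rule exI[of _ "\<lambda>a. [j,i,n]!a"])
      apply (simp only: all3L pairs3L)
      using ji ijn i j xn L by simp
    thus False using a1 by (simp add: avoids_def)
  qed
  define y where "y = \<pi>!(i+1)"
  have i1: "i + 1 < n" using ij ijn by simp
  have "y \<noteq> x + 1" using dist[of i "i+1"] i i1 by (simp add: y_def)
  moreover have "y \<noteq> x" using dist[of n "i+1"] xn i1 by (simp add: y_def)
  moreover have "\<not> y > x + 1"
  proof
    assume "y > x + 1"
    hence "\<exists>i j. i < j \<and> j < length \<pi> \<and> i + 1 < length \<pi> \<and>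
      \<pi> ! j < \<pi> ! i \<and> \<pi> ! i < \<pi> ! (i + 1) \<and> \<pi> ! i = \<pi> ! j + 1"
      using ijn i1 i xn L by (intro exI[of _ i] exI[of _ n]) (simp add: y_def)
    thus False using f by (simp add: fishburn_def)
  qed
  ultimately have yx: "y < x" by simp
  have "j \<noteq> i + 1" using yx j by (auto simp: y_def)
  hence ji1: "i + 1 < j" using ij by simp
  have "contains \<pi> [3,1,4,2]" unfolding contains_def
    apply (rule exI[of _ "\<lambda>a. [i,i+1,j,n]!a"])
    apply (simp only: all4L pairs4L)
    using ji1 ijn i j xn L yx by (simp add: y_def)
  thus False using a2 by (simp add: avoids_def)
qed

lemma decomp1: assumes "\<pi> \<in> perms (Suc n)" "last \<pi> = Suc n" shows "\<exists>\<sigma>\<in>perms n. \<pi> = \<sigma> @ [Suc n]"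
proof -
  have d: "distinct \<pi>" and s: "set \<pi> = {1..Suc n}" using assms by (auto simp: perms_def)
  have ne: "\<pi> \<noteq> []" using s by auto
  obtain \<sigma> where e: "\<pi> = \<sigma> @ [Suc n]" by (metis append_butlast_last_id ne assms(2))
  have d': "distinct \<sigma>" "Suc n \<notin> set \<sigma>" using d e by auto
  have "set \<sigma> = {1..Suc n} - {Suc n}" using s e d' by auto
  also have "\<dots> = {1..n}" by auto
  finally show ?thesis using d' e by (auto simp: perms_def)
qed

definition dec :: "nat \<Rightarrow> nat \<Rightarrow> nat" where "dec n v = (if n < v then v - 1 else v)"

lemma dec_inj: assumes "a = Suc n \<or> a < n" "b = Suc n \<or> b < n" "dec n a = dec n b" shows "a = b"
proof -
  have da: "dec n a = (if a = Suc n then n else a)" using assms(1) by (auto simp: dec_def)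
  have db: "dec n b = (if b = Suc n then n else b)" using assms(2) by (auto simp: dec_def)
  show ?thesis using assms da db by (auto split: if_splits)
qed

lemma decomp2: assumes "\<pi> \<in> perms (Suc n)" "last \<pi> = n" "n \<ge> 1"
  shows "\<exists>\<sigma>\<in>perms n. \<pi> = map (inc n) \<sigma> @ [n]"
proof -
  have d: "distinct \<pi>" and s: "set \<pi> = {1..Suc n}" using assms by (auto simp: perms_def)
  have ne: "\<pi> \<noteq> []" using s by auto
  obtain \<tau> where e: "\<pi> = \<tau> @ [n]" by (metis append_butlast_last_id ne assms(2))
  have d': "distinct \<tau>" "n \<notin> set \<tau>" using d e by auto
  have st: "set \<tau> = {1..Suc n} - {n}" using s e d' by auto
  have inj: "inj_on (dec n) (set \<tau>)"
  proof (rule inj_onI)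
    fix a b assume "a \<in> set \<tau>" "b \<in> set \<tau>" "dec n a = dec n b"
    moreover have "a \<in> {1..Suc n} - {n}" "b \<in> {1..Suc n} - {n}"
      using \<open>a \<in> set \<tau>\<close> \<open>b \<in> set \<tau>\<close> st by blast+
    hence "a = Suc n \<or> a < n" "b = Suc n \<or> b < n" by auto
    ultimately show "a = b" using dec_inj by blast
  qed
  have "set (map (dec n) \<tau>) = {1..n}"
  proof
    show "set (map (dec n) \<tau>) \<subseteq> {1..n}"
    proof
      fix v assume "v \<in> set (map (dec n) \<tau>)"
      then obtain x where x: "x \<in> set \<tau>" "v = dec n x" by auto
      have "x \<in> {1..Suc n}" "x \<noteq> n" using x(1) st by auto
      thus "v \<in> {1..n}" using x(2) assms(3) unfolding dec_def by (cases "n < x") auto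
    qed
    show "{1..n} \<subseteq> set (map (dec n) \<tau>)"
    proof
      fix y assume y: "y \<in> {1..n}"
      show "y \<in> set (map (dec n) \<tau>)"
      proof (cases "y < n")
        case True
        hence "dec n y = y" "y \<in> set \<tau>" using st y by (auto simp: dec_def)
        thus ?thesis by (metis image_eqI set_map)
      next
        case False
        hence "y = n" using y by auto
        moreover have "dec n (Suc n) = n" "Suc n \<in> set \<tau>" using st by (auto simp: dec_def)
        ultimately show ?thesis by (metis image_eqI set_map)
      qed
    qed
  qed
  moreover have "distinct (map (dec n) \<tau>)" using d' inj by (simp add: distinct_map)
  moreover have "map (inc n) (map (dec n) \<tau>) = \<tau>"
    unfolding map_map by (rule map_idI) (use d' in \<open>auto simp: inc_def dec_def\<close>)
  ultimately have "map (dec n) \<tau> \<in> perms n" "\<pi> = map (inc n) (map (dec n) \<tau>) @ [n]"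
    using e unfolding perms_def by auto
  thus ?thesis by blast
qed

lemma F_perms: "F n ps \<subseteq> perms n" by (auto simp: F_def)

lemma F_step: assumes n: "n \<ge> 1"
  shows "F (Suc n) PP = (\<lambda>\<sigma>. \<sigma>@[Suc n]) ` F n PP \<union> (\<lambda>\<sigma>. map (inc n) \<sigma> @ [n]) ` F n PP"
proof
  show "F (Suc n) PP \<subseteq> (\<lambda>\<sigma>. \<sigma>@[Suc n]) ` F n PP \<union> (\<lambda>\<sigma>. map (inc n) \<sigma> @ [n]) ` F n PP"
  proof
    fix \<pi> assume \<pi>: "\<pi> \<in> F (Suc n) PP"
    have p: "\<pi> \<in> perms (Suc n)" using \<pi> F_perms by blast
    from last_big[OF \<pi> n]
    show "\<pi> \<in> (\<lambda>\<sigma>. \<sigma>@[Suc n]) ` F n PP \<union> (\<lambda>\<sigma>. map (inc n) \<sigma> @ [n]) ` F n PP"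
    proof
      assume "last \<pi> = n"
      then obtain \<sigma> where \<sigma>: "\<sigma> \<in> perms n" "\<pi> = map (inc n) \<sigma> @ [n]" using decomp2 p n by blast
      hence "\<sigma> \<in> F n PP" using F_e2[OF \<sigma>(1) n] \<pi> by simp
      thus ?thesis using \<sigma> by blast
    next
      assume "last \<pi> = Suc n"
      then obtain \<sigma> where \<sigma>: "\<sigma> \<in> perms n" "\<pi> = \<sigma> @ [Suc n]" using decomp1 p by blast
      hence "\<sigma> \<in> F n PP" using F_e1[OF \<sigma>(1)] \<pi> by simp
      thus ?thesis using \<sigma> by blast
    qed
  qed
next
  show "(\<lambda>\<sigma>. \<sigma>@[Suc n]) ` F n PP \<union> (\<lambda>\<sigma>. map (inc n) \<sigma> @ [n]) ` F n PP \<subseteq> F (Suc n) PP"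
  proof
    fix \<pi> assume "\<pi> \<in> (\<lambda>\<sigma>. \<sigma>@[Suc n]) ` F n PP \<union> (\<lambda>\<sigma>. map (inc n) \<sigma> @ [n]) ` F n PP"
    then obtain \<sigma> where \<sigma>: "\<sigma> \<in> F n PP" and "\<pi> = \<sigma>@[Suc n] \<or> \<pi> = map (inc n) \<sigma> @ [n]" by blast
    moreover have "\<sigma> \<in> perms n" using \<sigma> F_perms by blast
    ultimately show "\<pi> \<in> F (Suc n) PP" using F_e1 F_e2 n by blast
  qed
qed

lemma finite_F: "finite (F n ps)"
proof (rule finite_subset)
  show "F n ps \<subseteq> {xs. set xs \<subseteq> {1..n} \<and> length xs = n}"
  proof
    fix xs assume "xs \<in> F n ps"
    hence "distinct xs" "set xs = {1..n}" by (auto simp: F_def perms_def)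
    thus "xs \<in> {xs. set xs \<subseteq> {1..n} \<and> length xs = n}" using distinct_card[of xs] by simp
  qed
  show "finite {xs. set xs \<subseteq> {1..n} \<and> length xs = (n::nat)}" by (rule finite_lists_length_eq) simp
qed

lemma card_step: assumes n: "n \<ge> 1" shows "card (F (Suc n) PP) = 2 * card (F n PP)"
proof -
  have i1: "inj_on (\<lambda>\<sigma>. \<sigma>@[Suc n]) (F n PP)" by (auto simp: inj_on_def)
  have i2: "inj_on (\<lambda>\<sigma>. map (inc n) \<sigma> @ [n]) (F n PP)" using inj_inc by (auto simp: inj_on_def)
  have dj: "(\<lambda>\<sigma>. \<sigma>@[Suc n]) ` F n PP \<inter> (\<lambda>\<sigma>. map (inc n) \<sigma> @ [n]) ` F n PP = {}" by auto
  show ?thesis unfolding F_step[OF n]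
    by (subst card_Un_disjoint) (use finite_F dj card_image[OF i1] card_image[OF i2] in auto)
qed

lemma F_one: "F 1 PP = {[1]}"
proof
  show "{[1]} \<subseteq> F 1 PP"
  proof -
    have c: "\<not> contains [1] p" if "length p \<ge> 2" for p
    proof
      assume "contains [1] p"
      then obtain idx where i1: "\<forall>a b. a < b \<and> b < length p \<longrightarrow> idx a < idx b"
        and i2: "\<forall>a<length p. idx a < length [1::nat]" unfolding contains_def by blast
      have "idx 0 < idx 1" "idx 1 < 1" using i1[rule_format, of 0 1] i2[rule_format, of 1] that by auto
      thus False by simp
    qed
    have "[1] \<in> F 1 PP" unfolding F_P_iff avoids_def perms_def fishburn_def using c by auto
    thus ?thesis by simp
  qed
  show "F 1 PP \<subseteq> {[1]}"
  proof
    fix xs assume "xs \<in> F 1 PP"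
    hence d: "distinct xs" "set xs = {1}" by (auto simp: F_def perms_def)
    hence "length xs = 1" using distinct_card[of xs] by simp
    then obtain a where "xs = [a]" by (metis One_nat_def length_0_conv length_Suc_conv)
    thus "xs \<in> {[1]}" using d by simp
  qed
qed

theorem mainTheorem5:
  fixes n :: nat
  assumes "n \<ge> 1"
  shows "card (F n [[3,2,1], [3,1,4,2]]) = 2 ^ (n - 1)"
  using assms
proof (induction n rule: nat_induct_at_least)
  case base
  have "card (F 1 PP) = 1" by (simp only: F_one) simp
  then show ?case by simp
next
  case (Suc n)
  then show ?case using card_step[OF Suc.hyps] by (cases n) auto
qed

end
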